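(* Let $n,m,N$ be positive integers with $n>m$ and $\frac{n-1}{n-m}\leq N\leq m$. For almost all $X_0\in\mathbb{C}^{m\times N}$ and $A\in\mathbb{C}^{n\times m}$ (outside a Lebesgue-null set), the $(1+n(N-1))\times mN$ matrix \[ \begin{bmatrix} \operatorname{vec}(X_0)^*\\ D(A^{(1,:)},X_0)\\ \vdots\\ D(A^{(n,:)},X_0) \end{bmatrix} \] has full column rank $mN$.
   Context: $\operatorname{vec}(X)$ is the column vector obtained by stacking the columns of $X$; $^*$ denotes conjugate transpose; $\otimes$ is the Kronecker product. $A^{(k,:)}\in\mathbb{C}^{1\times m}$ is the $k$th row of $A$ and $X_0^{(:,j)}$ the $j$th column of $X_0$. For a row vector $a\in\mathbb{C}^{1\times m}$ and $X_0\in\mathbb{C}^{m\times N}$, $D(a,X_0)\in\mathbb{C}^{(N-1)\times mN}$ is defined as $D(a,X_0)=B\otimes a$, where $B\in\mathbb{C}^{(N-1)\times N}$ has, in its row $i-1$ (for $i=2,\dots,N$), entry $-aX_0^{(:,i)}$ in column $1$, entry $aX_0^{(:,1)}$ in column $i$, and zeros elsewhere. *)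

theory Defs
  imports "HOL-Analysis.Analysis" "Jordan_Normal_Form.DL_Rank"
begin

text \<open>vec(X): stack the columns of X (0-indexed: entry i + m*j is X(i,j)).\<close>
definition vecm :: "complex mat \<Rightarrow> complex vec" where
  "vecm X = vec (dim_row X * dim_col X) (\<lambda>k. X $$ (k mod dim_row X, k div dim_row X))"

definition kron :: "complex mat \<Rightarrow> complex mat \<Rightarrow> complex mat" where
  "kron B C = mat (dim_row B * dim_row C) (dim_col B * dim_col C)
     (\<lambda>(i,j). B $$ (i div dim_row C, j div dim_col C) * C $$ (i mod dim_row C, j mod dim_col C))"

text \<open>The matrix B of the paper (0-indexed): row r (paper row i-1 with i = r+2) has
  entry -a X0^(:,r+1) in column 0 and a X0^(:,0) in column r+1.\<close>
definition Bmat :: "complex vec \<Rightarrow> complex mat \<Rightarrow> complex mat" where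
  "Bmat a X0 = mat (dim_col X0 - 1) (dim_col X0)
     (\<lambda>(r,c). if c = 0 then - (a \<bullet> col X0 (r+1))
              else if c = r + 1 then a \<bullet> col X0 0 else 0)"

definition Dmat :: "complex vec \<Rightarrow> complex mat \<Rightarrow> complex mat" where
  "Dmat a X0 = kron (Bmat a X0) (mat_of_row a)"

definition stacked :: "complex mat \<Rightarrow> complex mat \<Rightarrow> complex mat" where
  "stacked A X0 = mat (1 + dim_row A * (dim_col X0 - 1)) (dim_row X0 * dim_col X0)
     (\<lambda>(i,j). if i = 0 then cnj (vecm X0 $ j)
              else Dmat (row A ((i - 1) div (dim_col X0 - 1))) X0
                     $$ ((i - 1) mod (dim_col X0 - 1), j))"

text \<open>Parameter space: X0 entries indexed by Inl (i,j), A entries by Inr (k,l).\<close>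
definition param_idx :: "nat \<Rightarrow> nat \<Rightarrow> nat \<Rightarrow> ((nat \<times> nat) + (nat \<times> nat)) set" where
  "param_idx n m N = Inl ` ({0..<m} \<times> {0..<N}) \<union> Inr ` ({0..<n} \<times> {0..<m})"

definition X0_of :: "nat \<Rightarrow> nat \<Rightarrow> ((nat \<times> nat) + (nat \<times> nat) \<Rightarrow> complex) \<Rightarrow> complex mat" where
  "X0_of m N z = mat m N (\<lambda>(i,j). z (Inl (i,j)))"

definition A_of :: "nat \<Rightarrow> nat \<Rightarrow> ((nat \<times> nat) + (nat \<times> nat) \<Rightarrow> complex) \<Rightarrow> complex mat" where
  "A_of n m z = mat n m (\<lambda>(i,j). z (Inr (i,j)))"

end

theory Submission
  imports Defs
begin



inductive pf :: "(('i \<Rightarrow> complex) \<Rightarrow> complex) \<Rightarrow> bool" where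
  pf_const: "pf (\<lambda>z. c)"
| pf_var: "pf (\<lambda>z. z i)"
| pf_add: "pf f \<Longrightarrow> pf g \<Longrightarrow> pf (\<lambda>z. f z + g z)"
| pf_mult: "pf f \<Longrightarrow> pf g \<Longrightarrow> pf (\<lambda>z. f z * g z)"

lemma pf_sum: "finite K \<Longrightarrow> (\<And>k. k \<in> K \<Longrightarrow> pf (f k)) \<Longrightarrow> pf (\<lambda>z. \<Sum>k\<in>K. f k z)"
proof (induction K rule: finite_induct)
  case empty
  then show ?case by (simp add: pf_const)
next
  case (insert x F)
  then show ?case by (simp add: pf_add)
qed

lemma pf_prod: "finite K \<Longrightarrow> (\<And>k. k \<in> K \<Longrightarrow> pf (f k)) \<Longrightarrow> pf (\<lambda>z. \<Prod>k\<in>K. f k z)"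
proof (induction K rule: finite_induct)
  case empty
  then show ?case by (simp add: pf_const)
next
  case (insert x F)
  then show ?case by (simp add: pf_mult)
qed

lemma pf_neg: "pf f \<Longrightarrow> pf (\<lambda>z. - f z)"
  using pf_mult[OF pf_const[of "-1"], of f] by simp





lemma pf_poly_rep:
  assumes "pf f"
  shows "\<exists>P. (\<forall>z w. f (z(i:=w)) = poly (P z) w) \<and> (\<forall>z w. P (z(i:=w)) = P z)
             \<and> (\<forall>k. pf (\<lambda>z. coeff (P z) k))"
  using assms
proof induction
  case (pf_const c)
  show ?case by (rule exI[of _ "\<lambda>z. [:c:]"]) (auto intro: pf.pf_const)
next
  case (pf_var j)
  show ?case
  proof (cases "j = i")
    case True
    show ?thesis by (rule exI[of _ "\<lambda>z. [:0,1:]"]) (auto simp: True intro: pf.pf_const)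
  next
    case False
    have "pf (\<lambda>z. coeff [:z j:] k)" for k
    proof (cases k)
      case 0
      then show ?thesis by (simp add: pf.pf_var)
    next
      case (Suc k')
      then show ?thesis by (simp add: pf.pf_const)
    qed
    then show ?thesis using False by (intro exI[of _ "\<lambda>z. [:z j:]"]) auto
  qed
next
  case (pf_add f g)
  then obtain P Q where P: "\<forall>z w. f (z(i:=w)) = poly (P z) w" "\<forall>z w. P (z(i:=w)) = P z"
      "\<forall>k. pf (\<lambda>z. coeff (P z) k)"
    and Q: "\<forall>z w. g (z(i:=w)) = poly (Q z) w" "\<forall>z w. Q (z(i:=w)) = Q z"
      "\<forall>k. pf (\<lambda>z. coeff (Q z) k)" by blast
  show ?case
  proof (intro exI[of _ "\<lambda>z. P z + Q z"] conjI allI)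
    fix z w show "f (z(i:=w)) + g (z(i:=w)) = poly (P z + Q z) w"
      by (simp only: poly_add P(1)[rule_format] Q(1)[rule_format])
  next
    fix z w show "P (z(i:=w)) + Q (z(i:=w)) = P z + Q z"
      by (simp only: P(2)[rule_format] Q(2)[rule_format])
  next
    fix k show "pf (\<lambda>z. coeff (P z + Q z) k)"
      by (simp only: coeff_add) (rule pf.pf_add[OF P(3)[rule_format] Q(3)[rule_format]])
  qed
next
  case (pf_mult f g)
  then obtain P Q where P: "\<forall>z w. f (z(i:=w)) = poly (P z) w" "\<forall>z w. P (z(i:=w)) = P z"
      "\<forall>k. pf (\<lambda>z. coeff (P z) k)"
    and Q: "\<forall>z w. g (z(i:=w)) = poly (Q z) w" "\<forall>z w. Q (z(i:=w)) = Q z"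
      "\<forall>k. pf (\<lambda>z. coeff (Q z) k)" by blast
  have "pf (\<lambda>z. coeff (P z * Q z) k)" for k
    unfolding coeff_mult by (rule pf_sum) (auto intro!: pf.pf_mult P(3)[rule_format] Q(3)[rule_format])
  then show ?case
  proof (intro exI[of _ "\<lambda>z. P z * Q z"] conjI allI)
    fix z w show "f (z(i:=w)) * g (z(i:=w)) = poly (P z * Q z) w"
      by (simp only: poly_mult P(1)[rule_format] Q(1)[rule_format])
  next
    fix z w show "P (z(i:=w)) * Q (z(i:=w)) = P z * Q z"
      by (simp only: P(2)[rule_format] Q(2)[rule_format])
  qed
qed





lemma pf_measurable:
  assumes "pf f"
  shows "f \<in> borel_measurable (PiM I (\<lambda>_. lborel :: complex measure))"
  using assms
proof induction
  case (pf_const c)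
  then show ?case by simp
next
  case (pf_var i)
  show ?case
  proof (cases "i \<in> I")
    case True
    then show ?thesis by measurable
  next
    case False
    have "(\<lambda>z. z i) \<in> borel_measurable (PiM I (\<lambda>_. lborel :: complex measure)) \<longleftrightarrow>
          (\<lambda>z. undefined :: complex) \<in> borel_measurable (PiM I (\<lambda>_. lborel :: complex measure))"
    proof (rule measurable_cong)
      fix w assume "w \<in> space (PiM I (\<lambda>_. lborel :: complex measure))"
      then have "w \<in> PiE I (\<lambda>_. space (lborel :: complex measure))" by (simp add: space_PiM)
      then show "w i = undefined" using False by (rule PiE_arb)
    qed
    then show ?thesis by simp
  qed
next
  case (pf_add f g)
  then show ?case by (auto intro!: borel_measurable_add)
next
  case (pf_mult f g)
  then show ?case by (auto intro!: borel_measurable_times)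
qed





lemma pf_AE:
  fixes I :: "'i set" and f :: "('i \<Rightarrow> complex) \<Rightarrow> complex"
  assumes "finite I" "pf f" "\<And>z z'. (\<And>j. j \<in> I \<Longrightarrow> z j = z' j) \<Longrightarrow> f z = f z'" "f z0 \<noteq> 0"
  shows "AE z in PiM I (\<lambda>_. lborel :: complex measure). f z \<noteq> 0"
  using assms(1-4)
proof (induction I arbitrary: f z0 rule: finite_induct)
  case empty
  show ?case
  proof (rule AE_I2)
    fix z
    have "f z = f z0" by (rule empty.prems(2)) simp
    then show "f z \<noteq> 0" using empty.prems(3) by simp
  qed
next
  case (insert i J f z0)
  obtain P where P1: "\<And>z w. f (z(i:=w)) = poly (P z) w" and P2: "\<And>z w. P (z(i:=w)) = P z"
    and P3: "\<And>k. pf (\<lambda>z. coeff (P z) k)"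
    using pf_poly_rep[OF insert.prems(1), of i] by blast
  have "poly (P z0) (z0 i) = f z0" using P1[of z0 "z0 i"] by simp
  hence "P z0 \<noteq> 0" using insert.prems(3) by auto
  then have k: "coeff (P z0) (degree (P z0)) \<noteq> 0" by simp
  define k where "k = degree (P z0)"
  have dep: "P z = P z'" if zz: "\<And>j. j \<in> J \<Longrightarrow> z j = z' j" for z z'
  proof -
    have "f (z(i:=w)) = f (z'(i:=w))" for w
      by (rule insert.prems(2)) (auto simp: zz)
    hence "poly (P z) = poly (P z')" using P1 by (auto simp: fun_eq_iff)
    thus "P z = P z'" by (simp add: poly_eq_poly_eq_iff)
  qed
  have depk: "coeff (P z) k = coeff (P z') k" if "\<And>j. j \<in> J \<Longrightarrow> z j = z' j" for z z'
    using dep[OF that] by simp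
  have AEJ: "AE x in PiM J (\<lambda>_. lborel :: complex measure). coeff (P x) k \<noteq> 0"
    by (rule insert.IH[OF P3 depk k[folded k_def]])
  interpret ps: product_sigma_finite "\<lambda>_. lborel :: complex measure"
    by (simp add: product_sigma_finite_def lborel.sigma_finite_measure_axioms)
  define M where "M = PiM (insert i J) (\<lambda>_. lborel :: complex measure)"
  define S where "S = {z \<in> space M. f z = 0}"
  have fm: "f \<in> borel_measurable M" unfolding M_def by (rule pf_measurable[OF insert.prems(1)])
  have Smeas: "S \<in> sets M"
  proof -
    have "S = f -` {0} \<inter> space M" unfolding S_def by auto
    also have "\<dots> \<in> sets M" by (rule measurable_sets[OF fm]) simp
    finally show ?thesis .
  qed
  have "emeasure M S = (\<integral>\<^sup>+z. indicator S z \<partial>M)" by (simp add: Smeas)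
  also have "\<dots> = (\<integral>\<^sup>+x. \<integral>\<^sup>+y. indicator S (x(i:=y)) \<partial>lborel \<partial>PiM J (\<lambda>_. lborel :: complex measure))"
    unfolding M_def
    by (rule ps.product_nn_integral_insert[OF insert(1,2)]) (use Smeas in \<open>simp add: M_def\<close>)
  also have "\<dots> = (\<integral>\<^sup>+x. 0 \<partial>PiM J (\<lambda>_. lborel :: complex measure))"
  proof (rule nn_integral_cong_AE)
    show "AE x in PiM J (\<lambda>_. lborel :: complex measure). (\<integral>\<^sup>+y. indicator S (x(i:=y)) \<partial>lborel) = 0"
      using AEJ
    proof eventually_elim
      case (elim x)
      hence "P x \<noteq> 0" by auto
      hence fin: "finite {y. poly (P x) y = 0}" by (rule poly_roots_finite)
      have closed: "{y. poly (P x) y = 0} \<in> sets (lborel :: complex measure)"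
        using fin by (simp add: finite_imp_closed borel_closed)
      have "(\<integral>\<^sup>+y. indicator S (x(i:=y)) \<partial>lborel) \<le> (\<integral>\<^sup>+y. indicator {y. poly (P x) y = 0} y \<partial>lborel)"
        by (intro nn_integral_mono) (auto simp: indicator_def S_def P1)
      also have "\<dots> = emeasure lborel {y. poly (P x) y = 0}" using closed by simp
      also have "\<dots> = 0" using fin by (intro emeasure_lborel_countable countable_finite)
      finally show ?case by simp
    qed
  qed
  also have "\<dots> = 0" by simp
  finally have "emeasure M S = 0" .
  moreover have "{z \<in> space M. \<not> f z \<noteq> 0} = S" unfolding S_def by simp
  ultimately have "AE z in M. f z \<noteq> 0" using AE_iff_measurable[OF Smeas, of "\<lambda>z. f z \<noteq> 0"] by simp
  then show ?case unfolding M_def .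
qed




definition Sv :: "nat \<Rightarrow> ((nat \<times> nat) + (nat \<times> nat) \<Rightarrow> complex) \<Rightarrow> nat \<Rightarrow> nat \<Rightarrow> complex" where
  "Sv m z q c = (\<Sum>t = 0..<m. z (Inr (q,t)) * z (Inl (t,c)))"

definition Bv :: "nat \<Rightarrow> ((nat \<times> nat) + (nat \<times> nat) \<Rightarrow> complex) \<Rightarrow> nat \<Rightarrow> nat \<Rightarrow> nat \<Rightarrow> complex" where
  "Bv m z q r c = (if c = 0 then - Sv m z q (r+1) else if c = r+1 then Sv m z q 0 else 0)"

definition ent :: "nat \<Rightarrow> nat \<Rightarrow> ((nat \<times> nat) + (nat \<times> nat) \<Rightarrow> complex) \<Rightarrow> nat \<Rightarrow> nat \<Rightarrow> complex" where
  "ent m N z i j = Bv m z ((i-1) div (N-1)) ((i-1) mod (N-1)) (j div m) * z (Inr ((i-1) div (N-1), j mod m))"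

lemma dims_of[simp]:
  "dim_row (A_of n m z) = n" "dim_col (A_of n m z) = m"
  "dim_row (X0_of m N z) = m" "dim_col (X0_of m N z) = N"
  by (simp_all add: A_of_def X0_of_def)

lemma Bmat_dims[simp]: "dim_row (Bmat a X) = dim_col X - 1" "dim_col (Bmat a X) = dim_col X"
  by (simp_all add: Bmat_def)

lemma Bmat_index:
  "r < dim_col X - 1 \<Longrightarrow> c < dim_col X \<Longrightarrow> Bmat a X $$ (r,c) =
     (if c = 0 then - scalar_prod a (col X (r+1)) else if c = r+1 then scalar_prod a (col X 0) else 0)"
  by (simp add: Bmat_def)

lemma kron_index:
  "i < dim_row B * dim_row C \<Longrightarrow> j < dim_col B * dim_col C \<Longrightarrow>
   kron B C $$ (i,j) = B $$ (i div dim_row C, j div dim_col C) * C $$ (i mod dim_row C, j mod dim_col C)"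
  by (simp add: kron_def)

lemma Dmat_index:
  assumes "r < dim_col X - 1" "j < dim_col X * dim_vec a" "0 < dim_vec a"
  shows "Dmat a X $$ (r,j) = Bmat a X $$ (r, j div dim_vec a) * a $ (j mod dim_vec a)"
proof -
  have "Dmat a X $$ (r,j) = Bmat a X $$ (r div 1, j div dim_vec a) * mat_of_row a $$ (r mod 1, j mod dim_vec a)"
    unfolding Dmat_def using assms by (subst kron_index) simp_all
  also have "mat_of_row a $$ (r mod 1, j mod dim_vec a) = a $ (j mod dim_vec a)"
    using assms by simp
  finally show ?thesis by simp
qed

lemma stacked_entry:
  assumes "0 < m" "1 \<le> i" "i < 1 + n*(N-1)" "j < m*N"
  shows "stacked (A_of n m z) (X0_of m N z) $$ (i,j) = ent m N z i j"
proof -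
  define q where "q = (i-1) div (N-1)"
  define r where "r = (i-1) mod (N-1)"
  define c where "c = j div m"
  define l where "l = j mod m"
  have nN: "n*(N-1) \<noteq> 0" using assms(2,3) by linarith
  have N1: "0 < N - 1" using nN by simp
  have i1: "i - 1 < n*(N-1)" using assms(2,3) by linarith
  have q: "q < n" unfolding q_def using less_mult_imp_div_less[OF i1] .
  have r: "r < N - 1" unfolding r_def using N1 by simp
  have jN: "j < N*m" using assms(4) by (simp add: mult.commute)
  have c: "c < N" unfolding c_def using less_mult_imp_div_less[OF jN] .
  have l: "l < m" unfolding l_def using assms(1) by simp
  let ?A = "A_of n m z" and ?X = "X0_of m N z"
  let ?a = "row ?A q"
  have rowA: "dim_vec ?a = m" by simp
  have sp: "scalar_prod ?a (col ?X c') = Sv m z q c'" if "c' < N" for c'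
    unfolding scalar_prod_def Sv_def using q that
    by (intro sum.cong) (auto simp: A_of_def X0_of_def)
  have B: "Bmat ?a ?X $$ (r, c) = Bv m z q r c"
    unfolding Bv_def using r c by (simp add: Bmat_index sp)
  have a: "?a $ l = z (Inr (q,l))" using q l by (simp add: A_of_def)
  have "stacked ?A ?X $$ (i,j) = Dmat ?a ?X $$ (r, j)"
    unfolding stacked_def q_def r_def using assms by simp
  also have "\<dots> = Bmat ?a ?X $$ (r, c) * ?a $ l"
    unfolding c_def l_def using r assms rowA by (subst Dmat_index) (simp_all add: mult.commute)
  also have "\<dots> = ent m N z i j"
    by (simp only: B a ent_def q_def[symmetric] r_def[symmetric] c_def[symmetric] l_def[symmetric])
  finally show ?thesis .
qed




lemma pf_Sv: "pf (\<lambda>z. Sv m z q c)"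
  unfolding Sv_def by (intro pf_sum) (auto intro: pf.intros)

lemma pf_if: "pf f \<Longrightarrow> pf g \<Longrightarrow> pf (\<lambda>z. if b then f z else g z)"
  by (cases b) simp_all

lemma pf_Bv: "pf (\<lambda>z. Bv m z q r c)"
  unfolding Bv_def by (intro pf_if pf_neg pf_Sv pf.pf_const)

lemma pf_ent: "pf (\<lambda>z. ent m N z i j)"
  unfolding ent_def by (intro pf.pf_mult pf_Bv pf.pf_var)

definition Mz :: "nat \<Rightarrow> nat \<Rightarrow> nat \<Rightarrow> ((nat \<times> nat) + (nat \<times> nat) \<Rightarrow> complex) \<Rightarrow> complex mat" where
  "Mz n m N z = mat (1 + n*(N-1)) (m*N) (\<lambda>(i,j). if i = 0 then (if j = 0 then 1 else 0) else ent m N z i j)"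

lemma sum_split_two:
  fixes T :: "nat \<Rightarrow> complex"
  assumes "r + 1 < N"
  shows "(\<Sum>c<N. Bv m z q r c * T c) = - Sv m z q (r+1) * T 0 + Sv m z q 0 * T (r+1)"
proof -
  have "(\<Sum>c<N. Bv m z q r c * T c)
      = (\<Sum>c<N. (if c = 0 then - Sv m z q (r+1) * T 0 else 0) + (if c = r+1 then Sv m z q 0 * T (r+1) else 0))"
    by (intro sum.cong) (auto simp: Bv_def)
  also have "\<dots> = - Sv m z q (r+1) * T 0 + Sv m z q 0 * T (r+1)"
    using assms by (simp add: sum.distrib)
  finally show ?thesis .
qed

lemma ent_lc:
  assumes "l < m" "r < N - 1"
  shows "ent m N z (1 + q*(N-1) + r) (l + c*m) = Bv m z q r c * z (Inr (q,l))"
proof -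
  have N1: "0 < N - 1" using assms by simp
  have qr: "(1 + q*(N-1) + r - 1) div (N-1) = q" "(1 + q*(N-1) + r - 1) mod (N-1) = r"
    using assms N1 by simp_all
  have lc: "(l + c*m) div m = c" "(l + c*m) mod m = l" using assms by simp_all
  show ?thesis unfolding ent_def qr lc ..
qed

lemma row_apply:
  assumes "0 < m" "r + 1 < N"
  shows "(\<Sum>j<m*N. ent m N z (1 + q*(N-1) + r) j * w j)
     = - Sv m z q (r+1) * (\<Sum>l<m. z (Inr (q,l)) * w (l + 0*m))
       + Sv m z q 0 * (\<Sum>l<m. z (Inr (q,l)) * w (l + (r+1)*m))"
proof -
  have r: "r < N - 1" using assms by simp
  define T where "T c = (\<Sum>l<m. z (Inr (q,l)) * w (l + c*m))" for c
  have "(\<Sum>j<m*N. ent m N z (1 + q*(N-1) + r) j * w j)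
      = (\<Sum>c<N. \<Sum>l<m. ent m N z (1 + q*(N-1) + r) (l + c*m) * w (l + c*m))"
    by (subst mult.commute) (rule sum_mult_product)
  also have "\<dots> = (\<Sum>c<N. Bv m z q r c * T c)"
    unfolding T_def sum_distrib_left
  proof (intro sum.cong refl)
    fix c l assume "l \<in> {..<m}"
    then show "ent m N z (1 + q*(N-1) + r) (l + c*m) * w (l + c*m) = Bv m z q r c * (z (Inr (q,l)) * w (l + c*m))"
      using ent_lc[of l m r N z q c] r by simp
  qed
  also have "\<dots> = - Sv m z q (r+1) * T 0 + Sv m z q 0 * T (r+1)"
    by (rule sum_split_two[OF assms(2)])
  finally show ?thesis unfolding T_def by simp
qed




lemma param_mem[simp]:
  "Inl (a,b) \<in> param_idx n m N \<longleftrightarrow> a < m \<and> b < N"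
  "Inr (a,b) \<in> param_idx n m N \<longleftrightarrow> a < n \<and> b < m"
  unfolding param_idx_def by auto

definition zs :: "nat \<Rightarrow> nat \<Rightarrow> nat \<Rightarrow> ((nat \<times> nat) + (nat \<times> nat)) \<Rightarrow> complex" where
  "zs n m N p = (if p \<in> param_idx n m N then (case p of Inl (k,c) \<Rightarrow> if c = 0 then 1 else (if k mod N = c then 1 else 0)
     | Inr (q,t) \<Rightarrow> if q < m then (if t = q then 1 else 0)
          else (if (q-m)*(N-1) \<le> t \<and> t \<le> (q-m)*(N-1) + (N-1) then 1 else 0)) else 0)"

lemma win_inj:
  fixes a b lo N :: nat
  assumes "a mod N = b mod N" "lo \<le> a" "lo \<le> b" "a \<le> lo + (N-1)" "b \<le> lo + (N-1)" "0 < N"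
  shows "a = b"
proof (rule ccontr)
  assume ne: "a \<noteq> b"
  have key: "x + N \<le> y" if "x mod N = y mod N" "x < y" for x y :: nat
  proof -
    have "x div N \<noteq> y div N" using that by (metis div_mult_mod_eq nat_neq_iff)
    moreover have "x div N \<le> y div N" using that by (simp add: div_le_mono)
    ultimately have "x div N + 1 \<le> y div N" by simp
    hence "(x div N + 1) * N \<le> y div N * N" by (rule mult_right_mono) simp
    hence "x div N * N + N \<le> y div N * N" by simp
    moreover have "x = x div N * N + x mod N" "y = y div N * N + y mod N" by simp_all
    ultimately show ?thesis using that(1) by linarith
  qed
  show False
  proof (cases "a < b")
    case True
    then show ?thesis using key[OF assms(1) True] assms by linarith
  next
    case False
    then have "b < a" using ne by simp
    then show ?thesis using key[OF assms(1)[symmetric]] assms by linarith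
  qed
qed

lemma sum_delta_mult:
  fixes g :: "nat \<Rightarrow> complex"
  assumes "k < m"
  shows "(\<Sum>t<m. (if t = k then 1 else 0) * g t) = g k"
proof -
  have "(\<Sum>t<m. (if t = k then 1 else 0) * g t) = (\<Sum>t<m. if t = k then g t else 0)"
    by (intro sum.cong) auto
  also have "\<dots> = g k" using assms by simp
  finally show ?thesis .
qed

lemma zs_Inl0: "t < m \<Longrightarrow> 0 < N \<Longrightarrow> zs n m N (Inl (t,0)) = 1"
  by (simp add: zs_def)

lemma zs_Inl: "t < m \<Longrightarrow> 0 < c \<Longrightarrow> c < N \<Longrightarrow> zs n m N (Inl (t,c)) = (if t mod N = c then 1 else 0)"
  by (simp add: zs_def)

lemma zs_Inr1: "k < m \<Longrightarrow> t < m \<Longrightarrow> m < n \<Longrightarrow> zs n m N (Inr (k,t)) = (if t = k then 1 else 0)"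
  by (simp add: zs_def)

lemma zs_Inr2: "\<not> q < m \<Longrightarrow> q < n \<Longrightarrow> t < m \<Longrightarrow>
   zs n m N (Inr (q,t)) = (if (q-m)*(N-1) \<le> t \<and> t \<le> (q-m)*(N-1) + (N-1) then 1 else 0)"
  by (simp add: zs_def)

lemma witness:
  assumes m: "0 < m" "m < n" "0 < N" and cnt: "m - 1 \<le> (n-m)*(N-1)"
    and w: "w \<in> carrier_vec (m*N)" "Mz n m N (zs n m N) *\<^sub>v w = 0\<^sub>v (1 + n*(N-1))"
  shows "w = 0\<^sub>v (m*N)"
proof -
  let ?z = "zs n m N"
  define X where "X l c = w $ (l + c*m)" for l c
  define d where "d k = X k 0" for k
  define T where "T q c = (\<Sum>l<m. ?z (Inr (q,l)) * X l c)" for q c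
  have row: "(\<Sum>j<m*N. Mz n m N ?z $$ (i,j) * w $ j) = 0" if "i < 1 + n*(N-1)" for i
  proof -
    have "(Mz n m N ?z *\<^sub>v w) $ i = 0" using w(2) that by simp
    moreover have "(Mz n m N ?z *\<^sub>v w) $ i = (\<Sum>j<m*N. Mz n m N ?z $$ (i,j) * w $ j)"
      using that w(1) unfolding Mz_def
      by (simp add: scalar_prod_def atLeast0LessThan)
    ultimately show ?thesis by simp
  qed
  have d0: "d 0 = 0"
  proof -
    have "(\<Sum>j<m*N. Mz n m N ?z $$ (0,j) * w $ j) = (\<Sum>j<m*N. (if j = 0 then 1 else 0) * w $ j)"
      by (intro sum.cong) (auto simp: Mz_def)
    also have "\<dots> = w $ 0" using m by (intro sum_delta_mult) simp
    finally show ?thesis using row[of 0] unfolding d_def X_def by simp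
  qed
  have eq: "- Sv m ?z q (r+1) * T q 0 + Sv m ?z q 0 * T q (r+1) = 0" if "q < n" "r < N - 1" for q r
  proof -
    have i: "1 + q*(N-1) + r < 1 + n*(N-1)"
    proof -
      have "q*(N-1) + r < q*(N-1) + (N-1)" using that by simp
      also have "\<dots> = (q+1)*(N-1)" by simp
      also have "\<dots> \<le> n*(N-1)" using that by (intro mult_right_mono) auto
      finally show ?thesis by simp
    qed
    have "(\<Sum>j<m*N. Mz n m N ?z $$ (1 + q*(N-1) + r,j) * w $ j)
        = (\<Sum>j<m*N. ent m N ?z (1 + q*(N-1) + r) j * w $ j)"
      using i by (intro sum.cong) (auto simp: Mz_def)
    also have "\<dots> = - Sv m ?z q (r+1) * T q 0 + Sv m ?z q 0 * T q (r+1)"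
      unfolding T_def X_def by (rule row_apply[where w = "\<lambda>j. w $ j"]) (use m that in auto)
    finally show ?thesis using row[OF i] by simp
  qed
  have erow: "X k c = (if k mod N = c then d k else 0)" if "k < m" "0 < c" "c < N" for k c
  proof -
    have S1: "Sv m ?z k c' = ?z (Inl (k,c'))" for c'
    proof -
      have "Sv m ?z k c' = (\<Sum>t<m. (if t = k then 1 else 0) * ?z (Inl (t,c')))"
        unfolding Sv_def atLeast0LessThan using that(1) m by (intro sum.cong) (auto simp: zs_Inr1)
      also have "\<dots> = ?z (Inl (k,c'))" by (rule sum_delta_mult[OF that(1)])
      finally show ?thesis .
    qed
    have T1: "T k c' = X k c'" for c'
    proof -
      have "T k c' = (\<Sum>t<m. (if t = k then 1 else 0) * X t c')"
        unfolding T_def using that(1) m by (intro sum.cong) (auto simp: zs_Inr1)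
      also have "\<dots> = X k c'" by (rule sum_delta_mult[OF that(1)])
      finally show ?thesis .
    qed
    have "k < n" using that m by simp
    have e: "- Sv m ?z k c * T k 0 + Sv m ?z k 0 * T k c = 0"
      using eq[OF \<open>k < n\<close>, of "c-1"] that by simp
    have z0: "?z (Inl (k,0)) = 1" using that m by (simp add: zs_Inl0)
    have zc: "?z (Inl (k,c)) = (if k mod N = c then 1 else 0)" using that by (simp add: zs_Inl)
    from e have "- ?z (Inl (k,c)) * X k 0 + X k c = 0"
      by (simp only: S1 T1 z0) simp
    then show ?thesis unfolding zc d_def by (cases "k mod N = c") simp_all
  qed
  have window: "d k = d (i*(N-1))"
    if i: "i < n - m" "i*(N-1) < k" "k \<le> i*(N-1) + (N-1)" "k < m" for i k
  proof -
    define lo where "lo = i*(N-1)"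
    define q where "q = m + i"
    have q: "q < n" "\<not> q < m" "q - m = i" using i unfolding q_def by auto
    define W where "W = {t \<in> {..<m}. lo \<le> t \<and> t \<le> lo + (N-1)}"
    have finW: "finite W" unfolding W_def by simp
    have kW: "k \<in> W" "lo \<in> W" using i unfolding W_def lo_def by auto
    define s where "s = card W"
    have s0: "s \<noteq> 0" unfolding s_def using finW kW by auto
    define \<sigma> where "\<sigma> = (\<Sum>t\<in>W. d t)"
    have a: "?z (Inr (q,t)) = (if t \<in> W then 1 else 0)" if "t < m" for t
      using that q unfolding W_def lo_def by (simp add: zs_Inr2)
    have S0: "Sv m ?z q 0 = of_nat s"
    proof -
      have "Sv m ?z q 0 = (\<Sum>t\<in>{..<m}. if lo \<le> t \<and> t \<le> lo + (N-1) then 1 else 0)"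
        unfolding Sv_def atLeast0LessThan using m by (intro sum.cong) (auto simp: a W_def zs_Inl0)
      also have "\<dots> = of_nat s" unfolding s_def W_def by (simp add: sum.inter_filter[symmetric])
      finally show ?thesis .
    qed
    have T0: "T q 0 = \<sigma>"
    proof -
      have "T q 0 = (\<Sum>t\<in>{..<m}. if lo \<le> t \<and> t \<le> lo + (N-1) then d t else 0)"
        unfolding T_def by (intro sum.cong) (auto simp: a W_def d_def)
      also have "\<dots> = \<sigma>" unfolding \<sigma>_def W_def by (simp add: sum.inter_filter[symmetric])
      finally show ?thesis .
    qed
    have nz: "of_nat s * d t = \<sigma>" if t: "t \<in> W" "t mod N \<noteq> 0" for t
    proof -
      define c where "c = t mod N"
      have c: "0 < c" "c < N" using t m unfolding c_def by auto
      have tm: "t < m" using t unfolding W_def by simp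
      have uniq: "u = t" if "u \<in> W" "u mod N = c" for u
        using that t(1) m(3) unfolding W_def c_def by (intro win_inj[of u N t lo]) auto
      have Sc: "Sv m ?z q c = 1"
      proof -
        have "Sv m ?z q c = (\<Sum>u<m. (if u = t then 1 else 0) * 1)"
          unfolding Sv_def atLeast0LessThan
          by (intro sum.cong refl) (use uniq c t in \<open>auto simp: a zs_Inl c_def\<close>)
        also have "\<dots> = 1" using sum_delta_mult[OF tm, of "\<lambda>_. 1"] by simp
        finally show ?thesis .
      qed
      have Tc: "T q c = d t"
      proof -
        have "T q c = (\<Sum>u<m. (if u = t then 1 else 0) * d u)"
          unfolding T_def
          by (intro sum.cong refl) (use uniq c t in \<open>auto simp: a erow c_def\<close>)
        also have "\<dots> = d t" using sum_delta_mult[OF tm] by simp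
        finally show ?thesis .
      qed
      have "- Sv m ?z q c * T q 0 + Sv m ?z q 0 * T q c = 0"
        using eq[OF q(1), of "c-1"] c by simp
      then show ?thesis using Sc Tc S0 T0 by (simp add: algebra_simps)
    qed
    define \<mu> where "\<mu> = \<sigma> / of_nat s"
    have allW: "d t = \<mu>" if t: "t \<in> W" for t
    proof (cases "t mod N = 0")
      case False
      then show ?thesis using nz[OF t] s0 unfolding \<mu>_def by (simp add: field_simps)
    next
      case True
      have others: "d u = \<mu>" if "u \<in> W - {t}" for u
      proof -
        have "u mod N \<noteq> 0"
        proof
          assume "u mod N = 0"
          then have "u = t" using that t True m(3) unfolding W_def by (intro win_inj[of u N t lo]) auto
          then show False using that by simp
        qed
        then show ?thesis using nz[of u] that s0 unfolding \<mu>_def by (simp add: field_simps)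
      qed
      obtain s' where s': "s = Suc s'" using s0 by (cases s) auto
      have "\<sigma> = d t + (\<Sum>u\<in>W - {t}. d u)" unfolding \<sigma>_def using finW t by (simp add: sum.remove)
      also have "(\<Sum>u\<in>W - {t}. d u) = of_nat s' * \<mu>"
        using others finW t s' unfolding s_def by simp
      finally have e1: "\<sigma> = d t + of_nat s' * \<mu>" .
      have ne: "(1 + of_nat s' :: complex) \<noteq> 0"
      proof -
        have "(1 + of_nat s' :: complex) = of_nat (Suc s')" by simp
        then show ?thesis by (metis of_nat_eq_0_iff Zero_not_Suc)
      qed
      have e2: "\<sigma> = (of_nat s' + 1) * \<mu>" unfolding \<mu>_def using ne s' by (simp add: field_simps)
      from e1 e2 show ?thesis by (simp add: algebra_simps)
    qed
    show ?thesis using allW[OF kW(1)] allW[OF kW(2)] unfolding lo_def by simp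
  qed
  have dall: "d k = 0" if "k < m" for k
    using that
  proof (induction k rule: less_induct)
    case (less k)
    show ?case
    proof (cases "k = 0")
      case True
      then show ?thesis using d0 by simp
    next
      case False
      have N2: "1 < N"
      proof (rule ccontr)
        assume "\<not> 1 < N"
        then have "N = 1" using m by simp
        then have "m \<le> 1" using cnt by simp
        then show False using less.prems False by simp
      qed
      define i where "i = (k - 1) div (N - 1)"
      have lo1: "i*(N-1) \<le> k - 1" unfolding i_def by (rule div_times_less_eq_dividend)
      have dm: "k - 1 = (k-1) div (N-1) * (N-1) + (k-1) mod (N-1)" by (rule div_mult_mod_eq[symmetric])
      have mm: "(k-1) mod (N-1) < N-1" using N2 by simp
      have lo2: "k - 1 < i*(N-1) + (N-1)" unfolding i_def using dm mm by linarith
      have "i*(N-1) < (n-m)*(N-1)" using lo1 less.prems cnt False by linarith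
      then have ilt: "i < n - m" by (simp add: mult_less_cancel2)
      have "d k = d (i*(N-1))" using window[OF ilt] lo1 lo2 False less.prems by simp
      also have "\<dots> = 0" using less.IH[of "i*(N-1)"] lo1 False less.prems by simp
      finally show ?thesis .
    qed
  qed
  have Xall: "X l c = 0" if "l < m" "c < N" for l c
  proof (cases "c = 0")
    case True
    then show ?thesis using dall[OF that(1)] unfolding d_def by simp
  next
    case False
    then show ?thesis using erow[OF that(1) _ that(2)] dall[OF that(1)] by simp
  qed
  show ?thesis
  proof (rule eq_vecI)
    show "dim_vec w = dim_vec (0\<^sub>v (m*N))" using w(1) by simp
  next
    fix j assume "j < dim_vec (0\<^sub>v (m*N))"
    then have j: "j < m*N" by simp
    have "j = j mod m + (j div m)*m" by simp
    moreover have "j div m < N" using j by (simp add: less_mult_imp_div_less mult.commute)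
    ultimately have "w $ j = 0" using Xall[of "j mod m" "j div m"] m unfolding X_def by simp
    then show "w $ j = 0\<^sub>v (m*N) $ j" using j by simp
  qed
qed




lemma finite_param: "finite (param_idx n m N)" unfolding param_idx_def by simp

definition Kw :: "nat \<Rightarrow> nat \<Rightarrow> nat \<Rightarrow> complex mat" where
  "Kw n m N = mat (m*N) (1 + n*(N-1)) (\<lambda>(i,j). cnj (Mz n m N (zs n m N) $$ (j,i)))"

definition rho :: "nat \<Rightarrow> nat \<Rightarrow> nat \<Rightarrow> ((nat \<times> nat) + (nat \<times> nat) \<Rightarrow> complex)
    \<Rightarrow> ((nat \<times> nat) + (nat \<times> nat) \<Rightarrow> complex)" where
  "rho n m N z = (\<lambda>p. if p \<in> param_idx n m N then z p else 0)"

definition fdet where "fdet n m N z = det (Kw n m N * Mz n m N (rho n m N z))"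

lemma Mz_carrier[simp]: "Mz n m N z \<in> carrier_mat (1 + n*(N-1)) (m*N)"
  by (simp add: Mz_def)

lemma Kw_carrier[simp]: "Kw n m N \<in> carrier_mat (m*N) (1 + n*(N-1))"
  by (simp add: Kw_def)

lemma pf_rho: "pf g \<Longrightarrow> pf (\<lambda>z. g (\<lambda>p. if p \<in> I then z p else 0))"
proof (induction rule: pf.induct)
  case (pf_const c)
  then show ?case by (rule pf.pf_const)
next
  case (pf_var i)
  show ?case
  proof (cases "i \<in> I")
    case True
    then show ?thesis by (simp add: pf.pf_var)
  next
    case False
    then show ?thesis by (simp add: pf.pf_const)
  qed
next
  case (pf_add f g)
  from pf_add(3,4) show ?case by (rule pf.pf_add)
next
  case (pf_mult f g)
  from pf_mult(3,4) show ?case by (rule pf.pf_mult)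
qed

lemma pf_det:
  assumes G: "\<And>z. G z \<in> carrier_mat d d" and E: "\<And>i j. i < d \<Longrightarrow> j < d \<Longrightarrow> pf (\<lambda>z. G z $$ (i,j))"
  shows "pf (\<lambda>z. det (G z))"
proof -
  have eq: "(\<lambda>z. det (G z)) = (\<lambda>z. \<Sum>p\<in>{p. p permutes {0..<d}}. of_int (sign p) * (\<Prod>i\<in>{0..<d}. G z $$ (i, p i)))"
  proof
    fix z
    have "dim_row (G z) = d" "dim_col (G z) = d" using G[of z] by auto
    then show "det (G z) = (\<Sum>p\<in>{p. p permutes {0..<d}}. of_int (sign p) * (\<Prod>i\<in>{0..<d}. G z $$ (i, p i)))"
      unfolding det_def by simp
  qed
  show ?thesis unfolding eq
  proof (rule pf_sum)
    show "finite {p. p permutes {0..<d}}" by (rule finite_permutations) simp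
  next
    fix p assume p: "p \<in> {p. p permutes {0..<d}}"
    show "pf (\<lambda>z. of_int (sign p) * (\<Prod>i\<in>{0..<d}. G z $$ (i, p i)))"
    proof (rule pf_mult[OF pf_const pf_prod])
      show "finite {0..<d}" by simp
    next
      fix i assume i: "i \<in> {0..<d}"
      have "p i \<in> {0..<d}" using p i by (simp add: permutes_in_image)
      then show "pf (\<lambda>z. G z $$ (i, p i))" using i by (intro E) auto
    qed
  qed
qed

lemma pf_Mz_entry:
  assumes "k < 1 + n*(N-1)" "j < m*N"
  shows "pf (\<lambda>z. Mz n m N z $$ (k,j))"
proof (cases "k = 0")
  case True
  then show ?thesis using assms by (simp add: Mz_def pf.pf_const)
next
  case False
  then show ?thesis using assms by (simp add: Mz_def pf_ent)
qed

lemma pf_fdet: "pf (fdet n m N)"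
proof -
  have "pf (\<lambda>z. det (Kw n m N * Mz n m N (rho n m N z)))"
  proof (rule pf_det)
    show "Kw n m N * Mz n m N (rho n m N z) \<in> carrier_mat (m*N) (m*N)" for z
      by (rule mult_carrier_mat[OF Kw_carrier Mz_carrier])
  next
    fix i j assume ij: "i < m*N" "j < m*N"
    have eq: "(\<lambda>z. (Kw n m N * Mz n m N (rho n m N z)) $$ (i,j))
        = (\<lambda>z. \<Sum>k\<in>{0..<1 + n*(N-1)}. Kw n m N $$ (i,k) * Mz n m N (rho n m N z) $$ (k,j))"
      using ij by (auto simp: fun_eq_iff scalar_prod_def Kw_def Mz_def intro!: sum.cong)
    show "pf (\<lambda>z. (Kw n m N * Mz n m N (rho n m N z)) $$ (i,j))"
      unfolding eq
    proof (rule pf_sum)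
      fix k assume k: "k \<in> {0..<1 + n*(N-1)}"
      show "pf (\<lambda>z. Kw n m N $$ (i,k) * Mz n m N (rho n m N z) $$ (k,j))"
        using pf_rho[OF pf_Mz_entry[of k n N j m], of "param_idx n m N"] k ij
        by (intro pf_mult[OF pf_const]) (simp add: rho_def)
    qed simp
  qed
  then show ?thesis unfolding fdet_def[abs_def] by simp
qed

lemma cnj_sq: "z * cnj z = complex_of_real ((cmod z)^2)"
  by (rule complex_norm_square[symmetric])

lemma sum_cnj_sq: "(\<Sum>i\<in>A. f i * cnj (f i)) = complex_of_real (\<Sum>i\<in>A. (cmod (f i))^2)"
proof -
  have "(\<Sum>i\<in>A. f i * cnj (f i)) = (\<Sum>i\<in>A. complex_of_real ((cmod (f i))^2))"
    by (intro sum.cong refl) (rule cnj_sq)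
  also have "\<dots> = complex_of_real (\<Sum>i\<in>A. (cmod (f i))^2)" by (rule of_real_sum[symmetric])
  finally show ?thesis .
qed

lemma Mz_dims[simp]: "dim_row (Mz n m N z) = 1 + n*(N-1)" "dim_col (Mz n m N z) = m*N"
  by (simp_all add: Mz_def)

lemma gram_det:
  fixes M :: "complex mat"
  assumes M: "M \<in> carrier_mat r c"
    and ker: "\<And>v. v \<in> carrier_vec c \<Longrightarrow> M *\<^sub>v v = 0\<^sub>v r \<Longrightarrow> v = 0\<^sub>v c"
  shows "det (mat c r (\<lambda>(i,j). cnj (M $$ (j,i))) * M) \<noteq> 0"
proof
  let ?H = "mat c r (\<lambda>(i,j). cnj (M $$ (j,i)))"
  have Hc: "?H \<in> carrier_mat c r" by simp
  have HM: "?H * M \<in> carrier_mat c c" using Hc M by (rule mult_carrier_mat)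
  assume "det (?H * M) = 0"
  then obtain v where v: "v \<in> carrier_vec c" "v \<noteq> 0\<^sub>v c" "(?H * M) *\<^sub>v v = 0\<^sub>v c"
    using det_0_iff_vec_prod_zero[OF HM] by blast
  define u where "u = M *\<^sub>v v"
  have u: "u \<in> carrier_vec r" using M v(1) unfolding u_def by (rule mult_mat_vec_carrier)
  have Hu: "?H *\<^sub>v u = 0\<^sub>v c" using v M Hc unfolding u_def by (simp add: assoc_mult_mat_vec)
  have "(\<Sum>j<c. cnj (v $ j) * (?H *\<^sub>v u) $ j) = 0" using Hu by simp
  moreover have "(\<Sum>j<c. cnj (v $ j) * (?H *\<^sub>v u) $ j) = (\<Sum>i<r. u $ i * cnj (u $ i))"
  proof -
    have "(\<Sum>j<c. cnj (v$j) * (?H *\<^sub>v u)$j) = (\<Sum>j<c. cnj (v$j) * (\<Sum>i<r. cnj (M$$(i,j)) * u$i))"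
      using u by (intro sum.cong) (auto simp: scalar_prod_def atLeast0LessThan)
    also have "\<dots> = (\<Sum>j<c. \<Sum>i<r. u$i * (cnj (M$$(i,j)) * cnj (v$j)))"
      by (simp add: sum_distrib_left mult_ac)
    also have "\<dots> = (\<Sum>i<r. \<Sum>j<c. u$i * (cnj (M$$(i,j)) * cnj (v$j)))"
      by (rule sum.swap)
    also have "\<dots> = (\<Sum>i<r. u$i * cnj (\<Sum>j<c. M$$(i,j) * v$j))"
      by (simp add: sum_distrib_left cnj_sum)
    also have "\<dots> = (\<Sum>i<r. u$i * cnj (u$i))"
      using M v by (intro sum.cong) (auto simp: u_def scalar_prod_def atLeast0LessThan)
    finally show ?thesis .
  qed
  ultimately have "(\<Sum>i<r. u $ i * cnj (u $ i)) = 0" by simp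
  hence "complex_of_real (\<Sum>i<r. (cmod (u$i))^2) = 0" by (simp only: sum_cnj_sq)
  hence "(\<Sum>i<r. (cmod (u$i))^2) = 0" by (simp only: of_real_eq_0_iff)
  hence "\<forall>i\<in>{..<r}. (cmod (u$i))^2 = 0" by (subst (asm) sum_nonneg_eq_0_iff) auto
  hence "u = 0\<^sub>v r" using u by (intro eq_vecI) auto
  hence "v = 0\<^sub>v c" using ker[OF v(1)] u_def by simp
  with v(2) show False by simp
qed

lemma full_rank_of_ker:
  fixes S :: "complex mat"
  assumes S: "S \<in> carrier_mat R C" and ker: "\<And>v. v \<in> carrier_vec C \<Longrightarrow> S *\<^sub>v v = 0\<^sub>v R \<Longrightarrow> v = 0\<^sub>v C"
  shows "vec_space.rank R S = C"
proof -
  interpret vec_space "TYPE(complex)" R .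
  have dist: "distinct (cols S)"
  proof (rule ccontr)
    assume "\<not> distinct (cols S)"
    then obtain i j where ij: "i < C" "j < C" "i \<noteq> j" "col S i = col S j"
      using S by (auto simp: distinct_conv_nth)
    define v where "v = (unit_vec C i - unit_vec C j :: complex vec)"
    have vc: "v \<in> carrier_vec C" unfolding v_def by simp
    have "S *\<^sub>v v = 0\<^sub>v R"
    proof (rule eq_vecI)
      fix k assume "k < dim_vec (0\<^sub>v R)"
      then have k: "k < R" by simp
      have "(S *\<^sub>v v) $ k = (\<Sum>t\<in>{0..<C}. S $$ (k,t) * ((if t = i then 1 else 0) - (if t = j then 1 else 0)))"
        using S k ij unfolding v_def by (auto simp: scalar_prod_def intro!: sum.cong)
      also have "\<dots> = (\<Sum>t\<in>{0..<C}. if t = i then S $$ (k,t) else 0) - (\<Sum>t\<in>{0..<C}. if t = j then S $$ (k,t) else 0)"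
        by (simp only: sum_subtractf[symmetric]) (intro sum.cong refl, auto)
      also have "\<dots> = S $$ (k,i) - S $$ (k,j)" using ij by simp
      also have "\<dots> = 0"
      proof -
        have a: "col S i $ k = S $$ (k,i)" "col S j $ k = S $$ (k,j)" using S k ij(1,2) by auto
        show ?thesis using a ij(4) by simp
      qed
      finally show "(S *\<^sub>v v) $ k = 0\<^sub>v R $ k" using k by simp
    qed (use S in simp)
    moreover have "v \<noteq> 0\<^sub>v C"
    proof
      assume "v = 0\<^sub>v C"
      then have "v $ i = 0" using ij by simp
      then show False using ij unfolding v_def by simp
    qed
    ultimately show False using ker[OF vc] by simp
  qed
  have "lin_indpt (set (cols S))"
  proof (rule ccontr)
    assume "\<not> lin_indpt (set (cols S))"
    then have "lin_dep (set (cols S))" by simp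
    then obtain v where "v \<in> carrier_vec C" "v \<noteq> 0\<^sub>v C" "S *\<^sub>v v = 0\<^sub>v R"
      using lin_depE[OF S _ dist] by blast
    then show False using ker by blast
  qed
  then show ?thesis using lin_indpt_full_rank[OF S dist] by simp
qed

lemma idx_lt: "l < m \<Longrightarrow> c < N \<Longrightarrow> l + c*m < m*(N::nat)"
proof -
  assume a: "l < m" "c < N"
  have "l + c*m < m + c*m" using a by simp
  also have "\<dots> = Suc c * m" by simp
  also have "\<dots> \<le> N*m" using a by (intro mult_le_mono1) simp
  finally show ?thesis by (simp add: mult.commute)
qed

lemma bridge:
  assumes m: "0 < m" "0 < N"
    and ker: "\<And>v. v \<in> carrier_vec (m*N) \<Longrightarrow> Mz n m N z *\<^sub>v v = 0\<^sub>v (1 + n*(N-1)) \<Longrightarrow> v = 0\<^sub>v (m*N)"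
    and z00: "z (Inl (0,0)) \<noteq> 0"
  shows "vec_space.rank (1 + n*(N-1)) (stacked (A_of n m z) (X0_of m N z)) = m*N"
proof -
  let ?R = "1 + n*(N-1)" and ?C = "m*N"
  let ?S = "stacked (A_of n m z) (X0_of m N z)"
  have Sc: "?S \<in> carrier_mat ?R ?C" by (simp add: stacked_def)
  have C0: "0 < ?C" using m by simp
  define x0 where "x0 = vec ?C (\<lambda>j. z (Inl (j mod m, j div m)))"
  have x0c: "x0 \<in> carrier_vec ?C" unfolding x0_def by simp
  have x0i: "x0 $ (l + c*m) = z (Inl (l,c))" if "l < m" "c < N" for l c
    using that idx_lt[OF that] m unfolding x0_def by simp
  have entx0: "(\<Sum>j<?C. ent m N z i j * x0 $ j) = 0" if i: "1 \<le> i" "i < ?R" for i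
  proof -
    have N1: "0 < N-1" using i by (cases "N-1") auto
    define q where "q = (i-1) div (N-1)"
    define r where "r = (i-1) mod (N-1)"
    have "(i-1) div (N-1) * (N-1) + (i-1) mod (N-1) = i - 1" by (rule div_mult_mod_eq)
    then have i_eq: "i = 1 + q*(N-1) + r" using i unfolding q_def r_def by linarith
    have r: "r + 1 < N" using N1 unfolding r_def
      by (metis Suc_eq_plus1 Suc_lessI less_diff_conv mod_less_divisor)
    have T: "(\<Sum>l<m. z (Inr (q,l)) * x0 $ (l + c*m)) = Sv m z q c" if "c < N" for c
      unfolding Sv_def atLeast0LessThan using that by (intro sum.cong) (auto simp: x0i)
    have "(\<Sum>j<?C. ent m N z i j * x0 $ j)
       = - Sv m z q (r+1) * (\<Sum>l<m. z (Inr (q,l)) * x0 $ (l + 0*m))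
         + Sv m z q 0 * (\<Sum>l<m. z (Inr (q,l)) * x0 $ (l + (r+1)*m))"
      unfolding i_eq by (rule row_apply[OF m(1) r])
    also have "\<dots> = 0" using T[of 0] T[of "r+1"] r m by simp
    finally show ?thesis .
  qed
  have kerS: "v = 0\<^sub>v ?C" if v: "v \<in> carrier_vec ?C" "?S *\<^sub>v v = 0\<^sub>v ?R" for v
  proof -
    have Srow: "(\<Sum>j<?C. ?S $$ (i,j) * v $ j) = 0" if "i < ?R" for i
    proof -
      have "(?S *\<^sub>v v) $ i = 0" using v(2) that by simp
      moreover have "(?S *\<^sub>v v) $ i = (\<Sum>j<?C. ?S $$ (i,j) * v $ j)"
        using that v(1) Sc by (simp add: scalar_prod_def atLeast0LessThan)
      ultimately show ?thesis by simp
    qed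
    have entv: "(\<Sum>j<?C. ent m N z i j * v $ j) = 0" if "1 \<le> i" "i < ?R" for i
    proof -
      have "(\<Sum>j<?C. ent m N z i j * v $ j) = (\<Sum>j<?C. ?S $$ (i,j) * v $ j)"
        using that m by (intro sum.cong) (auto simp: stacked_entry)
      then show ?thesis using Srow[OF that(2)] by simp
    qed
    define Y where "Y = v $ 0 \<cdot>\<^sub>v x0 - z (Inl (0,0)) \<cdot>\<^sub>v v"
    have Yc: "Y \<in> carrier_vec ?C" unfolding Y_def using x0c v(1) by simp
    have Yi: "Y $ j = v $ 0 * x0 $ j - z (Inl (0,0)) * v $ j" if "j < ?C" for j
      unfolding Y_def using that x0c v(1) by simp
    have "Mz n m N z *\<^sub>v Y = 0\<^sub>v ?R"
    proof (rule eq_vecI)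
      fix i assume "i < dim_vec (0\<^sub>v ?R)"
      then have i: "i < ?R" by simp
      have "(Mz n m N z *\<^sub>v Y) $ i = (\<Sum>j<?C. Mz n m N z $$ (i,j) * Y $ j)"
        using i Yc by (simp add: index_mult_mat_vec scalar_prod_def atLeast0LessThan)
      also have "\<dots> = 0"
      proof (cases "i = 0")
        case True
        have "(\<Sum>j<?C. Mz n m N z $$ (i,j) * Y $ j) = (\<Sum>j<?C. (if j = 0 then 1 else 0) * Y $ j)"
          using True by (intro sum.cong) (auto simp: Mz_def)
        also have "\<dots> = Y $ 0" by (rule sum_delta_mult[OF C0])
        also have "\<dots> = 0" using Yi[OF C0] x0i[of 0 0] m by simp
        finally show ?thesis .
      next
        case False
        have "(\<Sum>j<?C. Mz n m N z $$ (i,j) * Y $ j)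
            = (\<Sum>j<?C. v $ 0 * (ent m N z i j * x0 $ j) - z (Inl (0,0)) * (ent m N z i j * v $ j))"
          using False i by (intro sum.cong) (auto simp: Mz_def Yi algebra_simps)
        also have "\<dots> = v $ 0 * (\<Sum>j<?C. ent m N z i j * x0 $ j) - z (Inl (0,0)) * (\<Sum>j<?C. ent m N z i j * v $ j)"
          by (simp add: sum_subtractf sum_distrib_left)
        also have "\<dots> = 0" using entx0[of i] entv[of i] False i by simp
        finally show ?thesis .
      qed
      finally show "(Mz n m N z *\<^sub>v Y) $ i = 0\<^sub>v ?R $ i" using i by simp
    qed simp
    then have "Y = 0\<^sub>v ?C" by (rule ker[OF Yc])
    define \<mu> where "\<mu> = v $ 0 / z (Inl (0,0))"
    have vx: "v $ j = \<mu> * x0 $ j" if "j < ?C" for j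
    proof -
      have "Y $ j = 0" using \<open>Y = 0\<^sub>v ?C\<close> that by simp
      then show ?thesis using Yi[OF that] z00 unfolding \<mu>_def by (simp add: field_simps)
    qed
    have vecm: "vecm (X0_of m N z) $ j = x0 $ j" if "j < ?C" for j
      using that m unfolding vecm_def x0_def
      by (simp add: X0_of_def less_mult_imp_div_less mult.commute)
    have "(\<Sum>j<?C. ?S $$ (0,j) * v $ j) = (\<Sum>j<?C. \<mu> * (cnj (x0 $ j) * x0 $ j))"
      by (intro sum.cong) (auto simp: stacked_def vecm vx)
    hence "\<mu> * (\<Sum>j<?C. cnj (x0 $ j) * x0 $ j) = 0"
      using Srow[of 0] by (simp add: sum_distrib_left)
    moreover have "(\<Sum>j<?C. cnj (x0 $ j) * x0 $ j) \<noteq> 0"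
    proof -
      have "(\<Sum>j<?C. cnj (x0 $ j) * x0 $ j) = (\<Sum>j<?C. x0 $ j * cnj (x0 $ j))"
        by (simp add: mult.commute)
      also have "\<dots> = complex_of_real (\<Sum>j<?C. (cmod (x0 $ j))^2)" by (rule sum_cnj_sq)
      finally have e: "(\<Sum>j<?C. cnj (x0 $ j) * x0 $ j) = complex_of_real (\<Sum>j<?C. (cmod (x0 $ j))^2)" .
      have "(cmod (x0 $ 0))^2 \<le> (\<Sum>j<?C. (cmod (x0 $ j))^2)"
        by (rule member_le_sum) (use C0 in auto)
      moreover have "0 < (cmod (x0 $ 0))^2" using x0i[of 0 0] m z00 by simp
      ultimately have "(\<Sum>j<?C. (cmod (x0 $ j))^2) \<noteq> 0" by linarith
      then show ?thesis unfolding e by (simp only: of_real_eq_0_iff) simp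
    qed
    ultimately have "\<mu> = 0" by simp
    show ?thesis
      by (rule eq_vecI) (use v(1) vx \<open>\<mu> = 0\<close> in auto)
  qed
  show ?thesis by (rule full_rank_of_ker[OF Sc kerS])
qed




theorem claim1:
  fixes n m N :: nat
  assumes "0 < n" "0 < m" "0 < N" "m < n"
    and "real (n - 1) / real (n - m) \<le> real N" "N \<le> m"
  shows "AE z in PiM (param_idx n m N) (\<lambda>_. lborel).
           vec_space.rank (1 + n * (N - 1)) (stacked (A_of n m z) (X0_of m N z)) = m * N"
proof -
  have nm: "0 < n - m" using assms by simp
  have cnt: "m - 1 \<le> (n-m)*(N-1)"
  proof -
    have "real (n-1) \<le> real N * real (n-m)"
      using assms(5) nm by (simp add: pos_divide_le_eq)
    hence "real (n-1) \<le> real (N * (n-m))" by simp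
    hence a: "n - 1 \<le> N * (n-m)" by (simp only: of_nat_le_iff)
    obtain N' where N': "N = Suc N'" using assms(3) by (cases N) auto
    have "N * (n-m) = (n-m)*(N-1) + (n-m)" unfolding N' by simp
    with a show ?thesis using assms(4) by linarith
  qed
  let ?I = "param_idx n m N"
  let ?M = "PiM ?I (\<lambda>_. lborel :: complex measure)"
  have wit: "fdet n m N (zs n m N) \<noteq> 0"
  proof -
    have "rho n m N (zs n m N) = zs n m N" by (auto simp: rho_def zs_def fun_eq_iff)
    hence "fdet n m N (zs n m N) = det (Kw n m N * Mz n m N (zs n m N))" by (simp add: fdet_def)
    also have "\<dots> \<noteq> 0" unfolding Kw_def
    proof (rule gram_det[OF Mz_carrier])
      fix v assume "v \<in> carrier_vec (m*N)" "Mz n m N (zs n m N) *\<^sub>v v = 0\<^sub>v (1 + n*(N-1))"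
      then show "v = 0\<^sub>v (m*N)" using witness[of m n N v] assms cnt by simp
    qed
    finally show ?thesis .
  qed
  have AE1: "AE z in ?M. fdet n m N z \<noteq> 0"
  proof (rule pf_AE[OF finite_param pf_fdet _ wit])
    fix z z' :: "(nat \<times> nat) + (nat \<times> nat) \<Rightarrow> complex"
    assume "\<And>j. j \<in> param_idx n m N \<Longrightarrow> z j = z' j"
    then have "rho n m N z = rho n m N z'" by (auto simp: rho_def fun_eq_iff)
    then show "fdet n m N z = fdet n m N z'" by (simp add: fdet_def)
  qed
  have AE2: "AE z in ?M. z (Inl (0,0)) \<noteq> 0"
  proof (rule pf_AE[OF finite_param pf.pf_var])
    fix z z' :: "(nat \<times> nat) + (nat \<times> nat) \<Rightarrow> complex"
    assume "\<And>j. j \<in> param_idx n m N \<Longrightarrow> z j = z' j"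
    then show "z (Inl (0,0)) = z' (Inl (0,0))" using assms by simp
  next
    show "zs n m N (Inl (0,0)) \<noteq> 0" using assms by (simp add: zs_def)
  qed
  show ?thesis using AE1 AE2
  proof eventually_elim
    case (elim z)
    let ?z = "rho n m N z"
    have ker: "v = 0\<^sub>v (m*N)" if v: "v \<in> carrier_vec (m*N)" "Mz n m N ?z *\<^sub>v v = 0\<^sub>v (1 + n*(N-1))" for v
    proof (rule ccontr)
      assume nz: "v \<noteq> 0\<^sub>v (m*N)"
      have KM: "Kw n m N * Mz n m N ?z \<in> carrier_mat (m*N) (m*N)"
        by (rule mult_carrier_mat[OF Kw_carrier Mz_carrier])
      have "(Kw n m N * Mz n m N ?z) *\<^sub>v v = Kw n m N *\<^sub>v (Mz n m N ?z *\<^sub>v v)"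
        using v(1) by (rule assoc_mult_mat_vec[OF Kw_carrier Mz_carrier])
      also have "\<dots> = Kw n m N *\<^sub>v 0\<^sub>v (1 + n*(N-1))" using v(2) by (rule arg_cong)
      also have "\<dots> = 0\<^sub>v (m*N)" using Kw_carrier[of n m N] by auto
      finally have "det (Kw n m N * Mz n m N ?z) = 0"
        using det_0_iff_vec_prod_zero[OF KM] v(1) nz by blast
      then show False using elim(1) unfolding fdet_def by simp
    qed
    have z00: "?z (Inl (0,0)) \<noteq> 0" using elim(2) assms by (simp add: rho_def)
    have "A_of n m ?z = A_of n m z" by (auto simp: A_of_def rho_def intro!: eq_matI)
    moreover have "X0_of m N ?z = X0_of m N z" by (auto simp: X0_of_def rho_def intro!: eq_matI)
    ultimately show ?case using bridge[where n=n and z="rho n m N z", OF assms(2,3) ker z00] by simp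
  qed
qed


end
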